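(* Let $m\ge 8$ and let $G^*$ be a $V_5$-free graph without isolated vertices having $m$ edges and maximum spectral radius among all such graphs. Let $u^*$ be a vertex at which a Perron vector of $G^*$ attains its maximum coordinate, and let $U=N(u^* )$, $W=V(G^* )\setminus (U\cup\{u^*\})$. If $W\neq\varnothing$, then $W$ is an independent set in $G^*$, i.e. $e(W)=0$.
   Context: $V_5=K_1\vee P_4$. A Perron vector is a positive eigenvector for the spectral radius of the (connected) graph $G^*$. $N(u)$ is the neighbourhood of $u$ and $e(X)$ the number of edges with both ends in $X$. *)

theory Defs
  imports Complex_Main
begin

definition simple_graph :: "'a set \<Rightarrow> ('a \<Rightarrow> 'a \<Rightarrow> bool) \<Rightarrow> bool" where
  "simple_graph V E \<longleftrightarrow> finite V \<and>
     (\<forall>u v. E u v \<longrightarrow> u \<in> V \<and> v \<in> V \<and> u \<noteq> v \<and> E v u)"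

definition nbhd :: "'a set \<Rightarrow> ('a \<Rightarrow> 'a \<Rightarrow> bool) \<Rightarrow> 'a \<Rightarrow> 'a set" where
  "nbhd V E u = {v \<in> V. E u v}"

definition num_edges :: "'a set \<Rightarrow> ('a \<Rightarrow> 'a \<Rightarrow> bool) \<Rightarrow> nat" where
  "num_edges X E = card {{u, v} | u v. u \<in> X \<and> v \<in> X \<and> E u v}"

definition no_isolated :: "'a set \<Rightarrow> ('a \<Rightarrow> 'a \<Rightarrow> bool) \<Rightarrow> bool" where
  "no_isolated V E \<longleftrightarrow> (\<forall>v \<in> V. \<exists>u \<in> V. E v u)"

definition contains_subgraph ::
  "'b set \<Rightarrow> ('b \<Rightarrow> 'b \<Rightarrow> bool) \<Rightarrow> 'a set \<Rightarrow> ('a \<Rightarrow> 'a \<Rightarrow> bool) \<Rightarrow> bool" where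
  "contains_subgraph VH EH V E \<longleftrightarrow>
     (\<exists>f. inj_on f VH \<and> f ` VH \<subseteq> V \<and> (\<forall>a \<in> VH. \<forall>b \<in> VH. EH a b \<longrightarrow> E (f a) (f b)))"

text \<open>V5 = K1 join P4: vertex 0 is the apex, 1-2-3-4 is the path.\<close>
definition V5_vertices :: "nat set" where "V5_vertices = {0..4}"

definition V5_adj :: "nat \<Rightarrow> nat \<Rightarrow> bool" where
  "V5_adj a b \<longleftrightarrow> a \<in> V5_vertices \<and> b \<in> V5_vertices \<and> a \<noteq> b \<and>
     (a = 0 \<or> b = 0 \<or> a = b + 1 \<or> b = a + 1)"

definition V5_free :: "'a set \<Rightarrow> ('a \<Rightarrow> 'a \<Rightarrow> bool) \<Rightarrow> bool" where
  "V5_free V E \<longleftrightarrow> \<not> contains_subgraph V5_vertices V5_adj V E"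

definition adj_eigenvalue :: "'a set \<Rightarrow> ('a \<Rightarrow> 'a \<Rightarrow> bool) \<Rightarrow> real \<Rightarrow> bool" where
  "adj_eigenvalue V E lam \<longleftrightarrow>
     (\<exists>x :: 'a \<Rightarrow> real. (\<exists>u \<in> V. x u \<noteq> 0) \<and>
        (\<forall>u \<in> V. (\<Sum>v \<in> nbhd V E u. x v) = lam * x u))"

definition spectral_radius :: "'a set \<Rightarrow> ('a \<Rightarrow> 'a \<Rightarrow> bool) \<Rightarrow> real" where
  "spectral_radius V E = Max {\<bar>lam\<bar> | lam. adj_eigenvalue V E lam}"

definition perron_vector :: "'a set \<Rightarrow> ('a \<Rightarrow> 'a \<Rightarrow> bool) \<Rightarrow> ('a \<Rightarrow> real) \<Rightarrow> bool" where
  "perron_vector V E x \<longleftrightarrow> (\<forall>u \<in> V. x u > 0) \<and>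
     (\<forall>u \<in> V. (\<Sum>v \<in> nbhd V E u. x v) = spectral_radius V E * x u)"

end

theory Submission
  imports Defs "Jordan_Normal_Form.Char_Poly"
begin

lemma eig_finite:
  fixes V :: "nat set" and E :: "nat \<Rightarrow> nat \<Rightarrow> bool"
  assumes fin: "finite V"
  shows "finite {lam. adj_eigenvalue V E lam}"
proof -
  define n where "n = card V"
  define vs where "vs = sorted_list_of_set V"
  have len: "length vs = n" unfolding vs_def n_def by simp
  have dist: "distinct vs" unfolding vs_def by simp
  have setvs: "set vs = V" unfolding vs_def using fin by simp
  have bij: "bij_betw (\<lambda>i. vs ! i) {..<n} V"
    using dist len setvs by (metis bij_betw_nth lessThan_atLeast0)
  define A :: "real mat" where "A = mat n n (\<lambda>(i,j). if E (vs!i) (vs!j) then 1 else 0)"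
  have A: "A \<in> carrier_mat n n" unfolding A_def by simp
  have sub: "{lam. adj_eigenvalue V E lam} \<subseteq> {lam. poly (char_poly A) lam = 0}"
  proof
    fix lam assume "lam \<in> {lam. adj_eigenvalue V E lam}"
    then obtain x where nz: "\<exists>u \<in> V. x u \<noteq> 0"
      and eq: "\<And>u. u \<in> V \<Longrightarrow> (\<Sum>v \<in> nbhd V E u. x v) = lam * x u"
      unfolding adj_eigenvalue_def by auto
    define v where "v = vec n (\<lambda>i. x (vs ! i))"
    have vc: "v \<in> carrier_vec n" unfolding v_def by simp
    have vnz: "v \<noteq> 0\<^sub>v n"
    proof
      assume "v = 0\<^sub>v n"
      then have "\<And>i. i < n \<Longrightarrow> x (vs ! i) = 0" unfolding v_def
        by (metis index_vec index_zero_vec(1))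
      moreover obtain u where "u \<in> V" "x u \<noteq> 0" using nz by auto
      ultimately show False using bij by (metis bij_betw_iff_bijections lessThan_iff)
    qed
    have Av: "A *\<^sub>v v = lam \<cdot>\<^sub>v v"
    proof (rule eq_vecI)
      show "dim_vec (A *\<^sub>v v) = dim_vec (lam \<cdot>\<^sub>v v)" using A vc by simp
      fix i assume "i < dim_vec (lam \<cdot>\<^sub>v v)"
      then have i: "i < n" using vc by simp
      have "(A *\<^sub>v v) $ i = (\<Sum>j<n. (if E (vs!i) (vs!j) then 1 else 0) * x (vs ! j))"
        using i A unfolding A_def v_def by (simp add: scalar_prod_def lessThan_atLeast0)
      also have "\<dots> = (\<Sum>j<n. (\<lambda>z. if E (vs!i) z then x z else 0) (vs ! j))"
        by (rule sum.cong) auto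
      also have "\<dots> = (\<Sum>z\<in>V. if E (vs!i) z then x z else 0)"
        using sum.reindex_bij_betw[OF bij, of "\<lambda>z. if E (vs!i) z then x z else 0"] by simp
      also have "\<dots> = (\<Sum>z\<in>nbhd V E (vs!i). x z)"
        unfolding nbhd_def using fin by (simp add: sum.inter_filter)
      also have "\<dots> = lam * x (vs ! i)" using eq i bij
        by (metis bij_betw_apply lessThan_iff)
      finally show "(A *\<^sub>v v) $ i = (lam \<cdot>\<^sub>v v) $ i" using i unfolding v_def by simp
    qed
    have "eigenvalue A lam" unfolding eigenvalue_def eigenvector_def
      using vc vnz Av A by auto
    then show "lam \<in> {lam. poly (char_poly A) lam = 0}"
      using eigenvalue_root_char_poly[OF A] by simp
  qed
  have "char_poly A \<noteq> 0" using degree_monic_char_poly[OF A] by auto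
  then show ?thesis using poly_roots_finite finite_subset[OF sub] by blast
qed

lemma spec_ge:
  fixes V :: "nat set" and E :: "nat \<Rightarrow> nat \<Rightarrow> bool"
  assumes "finite V" "adj_eigenvalue V E lam"
  shows "lam \<le> spectral_radius V E"
proof -
  have "finite {\<bar>lam\<bar> | lam. adj_eigenvalue V E lam}"
    using eig_finite[OF assms(1), of E] by (simp add: setcompr_eq_image)
  then have "\<bar>lam\<bar> \<le> spectral_radius V E" unfolding spectral_radius_def
    using assms(2) by (intro Max_ge) auto
  then show ?thesis by simp
qed

lemma sg_sym: "simple_graph V E \<Longrightarrow> E u v \<Longrightarrow> E v u"
  unfolding simple_graph_def by blast
lemma sg_irr: "simple_graph V E \<Longrightarrow> E u v \<Longrightarrow> u \<noteq> v"
  unfolding simple_graph_def by blast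
lemma sg_in: "simple_graph V E \<Longrightarrow> E u v \<Longrightarrow> u \<in> V \<and> v \<in> V"
  unfolding simple_graph_def by blast
lemma sg_fin: "simple_graph V E \<Longrightarrow> finite V"
  unfolding simple_graph_def by blast

lemma handshake:
  assumes sg: "simple_graph V E" and X: "X \<subseteq> V"
  shows "2 * num_edges X E = (\<Sum>v\<in>X. card {u\<in>X. E v u})"
proof -
  have fX: "finite X" using sg X sg_fin finite_subset by blast
  define P where "P = Sigma X (\<lambda>u. {v\<in>X. E u v})"
  have cP: "card P = (\<Sum>u\<in>X. card {v\<in>X. E u v})"
    unfolding P_def using fX by (simp add: card_SigmaI)
  have fP: "finite P" unfolding P_def using fX by simp
  define S where "S = {{u, v} | u v. u \<in> X \<and> v \<in> X \<and> E u v}"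
  have SP: "S = (\<lambda>p. {fst p, snd p}) ` P"
  proof (rule Set.set_eqI)
    fix e show "e \<in> S \<longleftrightarrow> e \<in> (\<lambda>p. {fst p, snd p}) ` P"
    proof
      assume "e \<in> S" then obtain u v where "e = {u,v}" "u\<in>X" "v\<in>X" "E u v"
        unfolding S_def by blast
      then show "e \<in> (\<lambda>p. {fst p, snd p}) ` P" unfolding P_def
        by (intro image_eqI[of _ _ "(u,v)"]) auto
    next
      assume "e \<in> (\<lambda>p. {fst p, snd p}) ` P"
      then obtain p where "p \<in> P" "e = {fst p, snd p}" by blast
      then show "e \<in> S" unfolding S_def P_def by (cases p) auto
    qed
  qed
  have fS: "finite S" using SP fP by simp
  have Pu: "P = (\<Union>e\<in>S. {p\<in>P. {fst p, snd p} = e})" unfolding SP by auto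
  have c2: "card {p\<in>P. {fst p, snd p} = e} = 2" if e_in: "e \<in> S" for e
  proof -
    obtain a b where ab: "e = {a,b}" "a \<in> X" "b \<in> X" "E a b" using e_in unfolding S_def by blast
    have ne: "a \<noteq> b" using sg_irr[OF sg ab(4)] .
    have Eba: "E b a" using sg_sym[OF sg ab(4)] .
    have "{p\<in>P. {fst p, snd p} = e} = {(a,b),(b,a)}"
      using ab Eba unfolding P_def by (auto simp: doubleton_eq_iff)
    then show ?thesis using ne by simp
  qed
  have "card P = (\<Sum>e\<in>S. card {p\<in>P. {fst p, snd p} = e})"
    apply (subst Pu)
    apply (rule card_UN_disjoint)
    using fS fP by auto
  also have "\<dots> = (\<Sum>e\<in>S. 2)" using c2 by simp
  also have "\<dots> = 2 * card S" by simp
  finally show ?thesis using cP unfolding num_edges_def S_def by simp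
qed

lemma V5_free_crit:
  assumes "\<And>a. \<exists>h. \<forall>b c. E a b \<and> E a c \<and> E b c \<longrightarrow> b = h \<or> c = h"
  shows "V5_free V E"
  unfolding V5_free_def contains_subgraph_def
proof
  assume "\<exists>f. inj_on f V5_vertices \<and> f ` V5_vertices \<subseteq> V \<and>
       (\<forall>a\<in>V5_vertices. \<forall>b\<in>V5_vertices. V5_adj a b \<longrightarrow> E (f a) (f b))"
  then obtain f where inj: "inj_on f V5_vertices"
    and ed: "\<forall>a\<in>V5_vertices. \<forall>b\<in>V5_vertices. V5_adj a b \<longrightarrow> E (f a) (f b)" by blast
  have e: "E (f 0) (f 1)" "E (f 0) (f 2)" "E (f 0) (f 3)" "E (f 0) (f 4)"
      "E (f 1) (f 2)" "E (f 3) (f 4)"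
    using ed by (auto simp: V5_adj_def V5_vertices_def)
  obtain h where h: "\<forall>b c. E (f 0) b \<and> E (f 0) c \<and> E b c \<longrightarrow> b = h \<or> c = h"
    using assms by blast
  have "f 1 = h \<or> f 2 = h" using h e by blast
  moreover have "f 3 = h \<or> f 4 = h" using h e by blast
  ultimately have "f 1 = f 3 \<or> f 1 = f 4 \<or> f 2 = f 3 \<or> f 2 = f 4" by auto
  moreover have I: "\<And>i j. i \<in> {0..4::nat} \<Longrightarrow> j \<in> {0..4} \<Longrightarrow> f i = f j \<Longrightarrow> i = j"
    using inj unfolding inj_on_def V5_vertices_def by blast
  moreover have "f 1 \<noteq> f 3" "f 1 \<noteq> f 4" "f 2 \<noteq> f 3" "f 2 \<noteq> f 4"
    using I[of 1 3] I[of 1 4] I[of 2 3] I[of 2 4] by auto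
  ultimately show False by blast
qed

lemma not_V5_free:
  assumes sg: "simple_graph V E"
    and d: "distinct [a0,a1,a2,a3,a4]"
    and e: "E a0 a1" "E a0 a2" "E a0 a3" "E a0 a4" "E a1 a2" "E a2 a3" "E a3 a4"
  shows "\<not> V5_free V E"
proof -
  define f where "f = (\<lambda>i. [a0,a1,a2,a3,a4] ! i)"
  have inj: "inj_on f V5_vertices" unfolding f_def V5_vertices_def
    by (rule inj_on_nth[OF d]) auto
  have ins: "f ` V5_vertices \<subseteq> V"
  proof
    fix y assume "y \<in> f ` V5_vertices"
    then obtain i where "i \<in> {0..4::nat}" "y = f i" unfolding V5_vertices_def by auto
    then have "i = 0 \<or> i = 1 \<or> i = 2 \<or> i = 3 \<or> i = 4" by auto
    then show "y \<in> V" using \<open>y = f i\<close> e sg_in[OF sg] unfolding f_def by auto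
  qed
  have es: "E a1 a0" "E a2 a0" "E a3 a0" "E a4 a0" "E a2 a1" "E a3 a2" "E a4 a3"
    using e sg_sym[OF sg] by auto
  have ed: "\<forall>a\<in>V5_vertices. \<forall>b\<in>V5_vertices. V5_adj a b \<longrightarrow> E (f a) (f b)"
  proof (intro ballI impI)
    fix a b assume "a \<in> V5_vertices" "b \<in> V5_vertices" "V5_adj a b"
    then have "a = 0 \<or> a = 1 \<or> a = 2 \<or> a = 3 \<or> a = 4" "b = 0 \<or> b = 1 \<or> b = 2 \<or> b = 3 \<or> b = 4"
      "a \<noteq> b" "(a = 0 \<or> b = 0 \<or> a = b + 1 \<or> b = a + 1)"
      unfolding V5_vertices_def V5_adj_def by auto
    then show "E (f a) (f b)" using e es unfolding f_def by auto
  qed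
  show ?thesis unfolding V5_free_def contains_subgraph_def using inj ins ed by blast
qed

definition bookE :: "nat \<Rightarrow> nat \<Rightarrow> nat \<Rightarrow> bool" where
  "bookE k a b \<longleftrightarrow> a \<le> k+1 \<and> b \<le> k+1 \<and> a \<noteq> b \<and> (a \<le> 1 \<or> b \<le> 1)"

lemma book_sg: "simple_graph {0..k+1} (bookE k)"
  unfolding simple_graph_def bookE_def by auto

lemma book_free: "V5_free {0..k+1} (bookE k)"
proof (rule V5_free_crit)
  fix a show "\<exists>h. \<forall>b c. bookE k a b \<and> bookE k a c \<and> bookE k b c \<longrightarrow> b = h \<or> c = h"
    by (rule exI[of _ "if a = 0 then 1 else 0"]) (auto simp: bookE_def)
qed

lemma book_noiso: "no_isolated {0..k+1} (bookE k)"
  unfolding no_isolated_def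
proof
  fix v assume v: "v \<in> {0..k+1}"
  show "\<exists>u\<in>{0..k+1}. bookE k v u"
  proof (cases "v = 0")
    case True then show ?thesis by (intro bexI[of _ 1]) (auto simp: bookE_def)
  next
    case False then show ?thesis using v by (intro bexI[of _ 0]) (auto simp: bookE_def)
  qed
qed

lemma sum_split1: "sum f {1..k+1} = f 1 + sum f {2..k+1::nat}"
  by (subst sum.atLeast_Suc_atMost) (auto simp: numeral_2_eq_2)
lemma sum_split0: "sum f {0..k+1} = f 0 + f 1 + sum f {2..k+1::nat}"
proof -
  have "sum f {0..k+1} = f 0 + sum f {Suc 0..k+1}" by (rule sum.atLeast_Suc_atMost) simp
  also have "\<dots> = f 0 + (f 1 + sum f {2..k+1})" using sum_split1[of f k] by simp
  finally show ?thesis by (simp only: add.assoc)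
qed

lemma book_nb0: "nbhd {0..k+1} (bookE k) 0 = {1..k+1}"
  unfolding nbhd_def bookE_def by auto
lemma book_nb1: "nbhd {0..k+1} (bookE k) 1 = insert 0 {2..k+1}"
  unfolding nbhd_def bookE_def by auto
lemma book_nbp: "v \<in> {2..k+1} \<Longrightarrow> nbhd {0..k+1} (bookE k) v = {0,1}"
  unfolding nbhd_def bookE_def by auto

lemma book_edges: "num_edges {0..k+1} (bookE k) = 2*k+1"
proof -
  have "2 * num_edges {0..k+1} (bookE k) = (\<Sum>v\<in>{0..k+1}. card (nbhd {0..k+1} (bookE k) v))"
    using handshake[OF book_sg, of "{0..k+1}"] unfolding nbhd_def by simp
  also have "\<dots> = card (nbhd {0..k+1} (bookE k) 0) + card (nbhd {0..k+1} (bookE k) 1)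
      + (\<Sum>v\<in>{2..k+1}. card (nbhd {0..k+1} (bookE k) v))"
    by (rule sum_split0)
  also have "\<dots> = (k+1) + (k+1) + (\<Sum>v\<in>{2..k+1}. 2)"
    unfolding book_nb0 book_nb1 using book_nbp[of _ k] by simp
  also have "\<dots> = (k+1) + (k+1) + 2*k" by simp
  finally show ?thesis by simp
qed

lemma book_eig:
  fixes r :: real
  assumes r: "r > 0" "r*r - r = 2 * real k"
  shows "adj_eigenvalue {0..k+1} (bookE k) r"
proof -
  define x :: "nat \<Rightarrow> real" where "x v = (if v \<le> 1 then 1 else 2/r)" for v
  have "(\<Sum>v \<in> nbhd {0..k+1} (bookE k) u. x v) = r * x u" if u: "u \<in> {0..k+1}" for u
  proof -
    have s2: "(\<Sum>v\<in>{2..k+1}. x v) = k * (2/r)" unfolding x_def by simp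
    consider "u = 0" | "u = 1" | "u \<in> {2..k+1}" using u by fastforce
    then show ?thesis
    proof cases
      case 1
      have "(\<Sum>v \<in> nbhd {0..k+1} (bookE k) u. x v) = x 1 + (\<Sum>v\<in>{2..k+1}. x v)"
        unfolding 1 book_nb0 by (rule sum_split1)
      also have "\<dots> = r" using s2 r by (simp add: x_def field_simps)
      finally show ?thesis using 1 by (simp add: x_def)
    next
      case 2
      have "(\<Sum>v \<in> nbhd {0..k+1} (bookE k) u. x v) = x 0 + (\<Sum>v\<in>{2..k+1}. x v)"
        unfolding 2 book_nb1 by simp
      also have "\<dots> = r" using s2 r by (simp add: x_def field_simps)
      finally show ?thesis using 2 by (simp add: x_def)
    next
      case 3
      have "nbhd {0..k+1} (bookE k) u = {0,1}" using 3 by (rule book_nbp)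
      then show ?thesis using r 3 by (simp add: x_def)
    qed
  qed
  moreover have "x 0 \<noteq> 0" unfolding x_def by simp
  ultimately show ?thesis unfolding adj_eigenvalue_def by (intro exI[of _ x]) auto
qed

lemma comp_odd:
  assumes "k \<ge> 1"
  shows "\<exists>V' (E' :: nat \<Rightarrow> nat \<Rightarrow> bool) r. simple_graph V' E' \<and> V5_free V' E' \<and>
           no_isolated V' E' \<and> num_edges V' E' = 2*k+1 \<and> r > 0 \<and> r*r - r = 2 * real k \<and>
           r \<le> spectral_radius V' E'"
proof -
  define r :: real where "r = (1 + sqrt (1 + 8*k))/2"
  have s: "sqrt (1 + 8*k) ^ 2 = 1 + 8 * k" by simp
  have rp: "r > 0" unfolding r_def by (simp add: add_pos_nonneg)
  have rr: "r*r - r = 2 * real k" unfolding r_def using s by (simp add: field_simps power2_eq_square)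
  show ?thesis
    using book_sg book_free book_noiso book_edges rp rr
      spec_ge[OF _ book_eig[OF rp rr]] by blast
qed

definition bookpE :: "nat \<Rightarrow> nat \<Rightarrow> nat \<Rightarrow> bool" where
  "bookpE k a b \<longleftrightarrow> bookE k a b \<or> (a = 0 \<and> b = k+2) \<or> (a = k+2 \<and> b = 0)"

lemma bookp_sg: "simple_graph {0..k+2} (bookpE k)"
  unfolding simple_graph_def bookpE_def bookE_def by auto

lemma bookp_free: "V5_free {0..k+2} (bookpE k)"
proof (rule V5_free_crit)
  fix a show "\<exists>h. \<forall>b c. bookpE k a b \<and> bookpE k a c \<and> bookpE k b c \<longrightarrow> b = h \<or> c = h"
    by (rule exI[of _ "if a = 0 then 1 else 0"]) (auto simp: bookpE_def bookE_def)
qed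

lemma bookp_noiso: "no_isolated {0..k+2} (bookpE k)"
  unfolding no_isolated_def
proof
  fix v assume v: "v \<in> {0..k+2}"
  show "\<exists>u\<in>{0..k+2}. bookpE k v u"
  proof (cases "v = 0")
    case True then show ?thesis by (intro bexI[of _ 1]) (auto simp: bookpE_def bookE_def)
  next
    case False then show ?thesis using v by (intro bexI[of _ 0]) (auto simp: bookpE_def bookE_def)
  qed
qed

lemma bookp_nb0: "nbhd {0..k+2} (bookpE k) 0 = {1..k+2}"
  unfolding nbhd_def bookpE_def bookE_def by auto
lemma bookp_nb1: "nbhd {0..k+2} (bookpE k) 1 = insert 0 {2..k+1}"
  unfolding nbhd_def bookpE_def bookE_def by auto
lemma bookp_nbp: "v \<in> {2..k+1} \<Longrightarrow> nbhd {0..k+2} (bookpE k) v = {0,1}"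
  unfolding nbhd_def bookpE_def bookE_def by auto
lemma bookp_nbe: "nbhd {0..k+2} (bookpE k) (k+2) = {0}"
  unfolding nbhd_def bookpE_def bookE_def by auto

lemma sum_split1p: "sum f {1..k+2} = f 1 + sum f {2..k+1::nat} + f (k+2)"
proof -
  have "sum f {1..k+2} = sum f {1..k+1} + f (k+2)"
    using sum.cl_ivl_Suc[of f 1 "k+1"] by simp
  then show ?thesis using sum_split1[of f k] by simp
qed
lemma sum_split0p: "sum f {0..k+2} = f 0 + f 1 + sum f {2..k+1::nat} + f (k+2)"
proof -
  have "sum f {0..k+2} = f 0 + sum f {Suc 0..k+2}" by (rule sum.atLeast_Suc_atMost) simp
  then show ?thesis using sum_split1p[of f k] by (simp add: add.assoc)
qed

lemma bookp_edges: "num_edges {0..k+2} (bookpE k) = 2*k+2"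
proof -
  have "2 * num_edges {0..k+2} (bookpE k) = (\<Sum>v\<in>{0..k+2}. card (nbhd {0..k+2} (bookpE k) v))"
    using handshake[OF bookp_sg, of "{0..k+2}"] unfolding nbhd_def by simp
  also have "\<dots> = card (nbhd {0..k+2} (bookpE k) 0) + card (nbhd {0..k+2} (bookpE k) 1)
      + (\<Sum>v\<in>{2..k+1}. card (nbhd {0..k+2} (bookpE k) v)) + card (nbhd {0..k+2} (bookpE k) (k+2))"
    by (rule sum_split0p)
  also have "\<dots> = (k+2) + (k+1) + (\<Sum>v\<in>{2..k+1}. 2) + 1"
    unfolding bookp_nb0 bookp_nb1 bookp_nbe using bookp_nbp[of _ k] by simp
  also have "\<dots> = 2 * (2*k+2)" by simp
  finally show ?thesis by simp
qed

lemma bookp_eig: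
  fixes r :: real
  assumes r: "r > 0" "r*r > real k" "(r*r - k - 1)*(r*r - k) = (r+k)^2"
  shows "adj_eigenvalue {0..k+2} (bookpE k) r"
proof -
  define c where "c = (r+k)/(r*r-k)"
  have d: "r*r - k \<noteq> 0" using r by simp
  have c1: "c * (r*r - k) = r + k" unfolding c_def using d by simp
  have c0: "c * (r + k) = r*r - k - 1"
  proof -
    have "c * (r+k) * (r*r-k) = (r+k) * (c * (r*r-k))" by (simp add: algebra_simps)
    also have "\<dots> = (r+k)^2" using c1 by (simp add: power2_eq_square)
    also have "\<dots> = (r*r - k - 1) * (r*r-k)" using r(3) by simp
    finally have "c * (r+k) * (r*r-k) = (r*r - k - 1) * (r*r-k)" .
    then show ?thesis using d by simp
  qed
  define x :: "nat \<Rightarrow> real" where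
    "x v = (if v = 0 then 1 else if v = 1 then c else if v = k+2 then 1/r else (1+c)/r)" for v
  have s2: "(\<Sum>v\<in>{2..k+1}. x v) = k * ((1+c)/r)" unfolding x_def by simp
  have "(\<Sum>v \<in> nbhd {0..k+2} (bookpE k) u. x v) = r * x u" if u: "u \<in> {0..k+2}" for u
  proof -
    consider "u = 0" | "u = 1" | "u \<in> {2..k+1}" | "u = k+2" using u by fastforce
    then show ?thesis
    proof cases
      case 1
      have "(\<Sum>v \<in> nbhd {0..k+2} (bookpE k) u. x v) = x 1 + (\<Sum>v\<in>{2..k+1}. x v) + x (k+2)"
        unfolding 1 bookp_nb0 by (rule sum_split1p)
      also have "\<dots> = c + k * ((1+c)/r) + 1/r" using s2 by (simp add: x_def)
      also have "\<dots> = r"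
      proof -
        have "(c + k * ((1+c)/r) + 1/r) * r = c*r + k*(1+c) + 1" using r by (simp add: field_simps)
        also have "\<dots> = r * r" using c0 by (simp add: algebra_simps)
        finally show ?thesis using r by (metis mult_right_cancel less_irrefl)
      qed
      finally show ?thesis using 1 by (simp add: x_def)
    next
      case 2
      have "(\<Sum>v \<in> nbhd {0..k+2} (bookpE k) u. x v) = x 0 + (\<Sum>v\<in>{2..k+1}. x v)"
        unfolding 2 bookp_nb1 by simp
      also have "\<dots> = 1 + k * ((1+c)/r)" using s2 by (simp add: x_def)
      also have "\<dots> = r * c"
      proof -
        have "(1 + k * ((1+c)/r)) * r = r + k + k*c" using r by (simp add: field_simps)
        also have "\<dots> = r * c * r" using c1 by (simp add: algebra_simps)
        finally show ?thesis using r by (metis mult_right_cancel less_irrefl)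
      qed
      finally show ?thesis using 2 by (simp add: x_def)
    next
      case 3
      have "nbhd {0..k+2} (bookpE k) u = {0,1}" using 3 by (rule bookp_nbp)
      then show ?thesis using r 3 by (simp add: x_def)
    next
      case 4
      show ?thesis unfolding 4 bookp_nbe using r by (simp add: x_def)
    qed
  qed
  moreover have "x 0 \<noteq> 0" unfolding x_def by simp
  ultimately show ?thesis unfolding adj_eigenvalue_def by (intro exI[of _ x]) auto
qed

lemma comp_even:
  assumes "k \<ge> 1"
  shows "\<exists>V' (E' :: nat \<Rightarrow> nat \<Rightarrow> bool) r. simple_graph V' E' \<and> V5_free V' E' \<and>
           no_isolated V' E' \<and> num_edges V' E' = 2*k+2 \<and> r > 1 \<and> r*r - r > 2 * real k + 1/2 \<and>
           r \<le> spectral_radius V' E'"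
proof -
  define g :: "real \<Rightarrow> real" where "g t = (t*t - k - 1)*(t*t - k) - (t+k)^2" for t
  define s where "s = sqrt (8*k+3)"
  have s2: "s * s = 8*k+3" unfolding s_def by simp
  have s1: "s > 1" unfolding s_def by simp
  define r0 where "r0 = (1 + s)/2"
  have r0sq: "r0*r0 = r0 + 2*k + 1/2" unfolding r0_def using s2 by (simp add: field_simps)
  have r0g: "r0 > 1" unfolding r0_def using s1 by simp
  have g0: "g r0 = -1/4"
  proof -
    have "g r0 = (r0 + k - 1/2)*(r0 + k + 1/2) - (r0+k)^2" unfolding g_def r0sq by (simp add: algebra_simps)
    also have "\<dots> = -1/4" by (simp add: algebra_simps power2_eq_square)
    finally show ?thesis .
  qed
  have sle: "s \<le> 2*k+3"
  proof -
    have "sqrt (8*k+3) \<le> sqrt ((2*k+3)^2)"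
      by (intro real_sqrt_le_mono) (simp add: power2_eq_square algebra_simps)
    then show ?thesis unfolding s_def by simp
  qed
  have r0le: "r0 \<le> k+2" unfolding r0_def using sle by simp
  have gb: "g (k+2) \<ge> 0"
  proof -
    have a: "(real k+2)*(real k+2) - k - 1 \<ge> 2*real k+2" by (simp add: algebra_simps)
    have b: "(real k+2)*(real k+2) - k \<ge> 2*real k+2" by (simp add: algebra_simps)
    have "(2*real k+2)*(2*real k+2) \<le> ((real k+2)*(real k+2) - k - 1)*((real k+2)*(real k+2) - k)"
      by (rule mult_mono[OF a b]) (use a in auto)
    moreover have "(2*real k+2)*(2*real k+2) = (real k + 2 + real k)^2"
      by (simp add: power2_eq_square algebra_simps)
    ultimately show ?thesis unfolding g_def by (simp add: add.commute)
  qed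
  have cont: "continuous_on {r0..k+2} g" unfolding g_def by (intro continuous_intros)
  obtain r where r: "r0 \<le> r" "r \<le> k+2" "g r = 0"
    using IVT'[of g r0 0 "k+2", OF _ gb r0le cont] g0 by auto
  have rne: "r \<noteq> r0" using r g0 by auto
  have rgt: "r > r0" using r rne by simp
  have r1: "r > 1" using rgt r0g by simp
  have rr: "r*r - r > 2 * real k + 1/2"
  proof -
    have "(r - r0) * (r + r0 - 1) > 0" using rgt r0g by simp
    then show ?thesis using r0sq by (simp add: algebra_simps)
  qed
  have rk: "r*r > real k" using rr r1 by simp
  have req: "(r*r - k - 1)*(r*r - k) = (r+k)^2" using r(3) unfolding g_def by simp
  have r0': "r > 0" using r1 by simp
  have fin: "finite {0..k+2}" by simp
  show ?thesis
    using bookp_sg bookp_free bookp_noiso bookp_edges r1 rr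
      spec_ge[OF fin bookp_eig[OF r0' rk req]] by blast
qed

locale gctx =
  fixes V :: "nat set" and E :: "nat \<Rightarrow> nat \<Rightarrow> bool" and u :: nat
  assumes sg: "simple_graph V E" and free: "V5_free V E" and uV: "u \<in> V"
begin

definition "UU = nbhd V E u"
definition "NU v = {z\<in>UU. E v z}"
definition "dU v = card (NU v)"
definition "II = {v\<in>UU. dU v = 0}"
definition "LL = {v\<in>UU. dU v = 1}"
definition "MM = {v\<in>UU. dU v = 2 \<and> (\<forall>a b. a\<in>NU v \<and> b\<in>NU v \<and> a\<noteq>b \<longrightarrow> E a b)}"
definition "CC = {v\<in>UU. 2 \<le> dU v \<and> v \<notin> MM}"

lemma finV: "finite V" using sg sg_fin by blast
lemma UUV: "UU \<subseteq> V" unfolding UU_def nbhd_def by auto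
lemma finU: "finite UU" using finV UUV finite_subset by blast
lemma finNU: "finite (NU v)" unfolding NU_def using finU by simp
lemma sym: "E a b \<Longrightarrow> E b a" using sg_sym[OF sg] .
lemma irr: "E a b \<Longrightarrow> a \<noteq> b" using sg_irr[OF sg] .
lemma inV: "E a b \<Longrightarrow> a \<in> V \<and> b \<in> V" using sg_in[OF sg] .
lemma uU: "v \<in> UU \<Longrightarrow> E u v" unfolding UU_def nbhd_def by auto
lemma u_notin: "u \<notin> UU" using uU irr by blast
lemma NU_sub: "NU v \<subseteq> UU" unfolding NU_def by auto
lemma NU_iff: "z \<in> NU v \<longleftrightarrow> z \<in> UU \<and> E v z" unfolding NU_def by auto

lemma noP4:
  assumes "a \<in> UU" "b \<in> UU" "c \<in> UU" "d \<in> UU" "distinct [a,b,c,d]"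
    "E a b" "E b c" "E c d"
  shows False
proof -
  have "distinct [u,a,b,c,d]" using assms(1-5) u_notin by auto
  then have "\<not> V5_free V E" using not_V5_free[OF sg] assms uU by blast
  then show False using free by blast
qed

lemma card_ge2_other: "finite S \<Longrightarrow> 2 \<le> card S \<Longrightarrow> \<exists>b\<in>S. b \<noteq> a"
proof (rule ccontr)
  assume "finite S" "2 \<le> card S" "\<not> (\<exists>b\<in>S. b \<noteq> a)"
  then have "S \<subseteq> {a}" by auto
  then have "card S \<le> 1" using card_mono[of "{a}" S] by simp
  then show False using \<open>2 \<le> card S\<close> by simp
qed

lemma card_ge3_other: "finite S \<Longrightarrow> 3 \<le> card S \<Longrightarrow> \<exists>e\<in>S. e \<noteq> a \<and> e \<noteq> b"
proof (rule ccontr)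
  assume "finite S" "3 \<le> card S" "\<not> (\<exists>e\<in>S. e \<noteq> a \<and> e \<noteq> b)"
  then have "S \<subseteq> {a,b}" by auto
  moreover have "card {a,b} \<le> 2" by (cases "a = b") auto
  ultimately have "card S \<le> 2" using card_mono[of "{a,b}" S] by simp
  then show False using \<open>3 \<le> card S\<close> by simp
qed

lemma card2_eq: "finite S \<Longrightarrow> card S = 2 \<Longrightarrow> a \<in> S \<Longrightarrow> b \<in> S \<Longrightarrow> a \<noteq> b \<Longrightarrow> S = {a,b}"
proof -
  assume fS: "finite S" and c: "card S = 2" and ab: "a \<in> S" "b \<in> S" "a \<noteq> b"
  have sub: "{a,b} \<subseteq> S" using ab by auto
  have "card {a,b} = 2" using ab by simp
  then show "S = {a,b}" using card_subset_eq[OF fS sub] c by simp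
qed

lemma CC_nbr_leaf:
  assumes c: "c \<in> CC" and a: "a \<in> NU c"
  shows "dU a = 1"
proof (rule ccontr)
  assume na: "dU a \<noteq> 1"
  have cU: "c \<in> UU" and dc: "2 \<le> dU c" and cM: "c \<notin> MM" using c unfolding CC_def by auto
  have aU: "a \<in> UU" and Eca: "E c a" using a unfolding NU_def by auto
  have "c \<in> NU a" using cU Eca sym unfolding NU_def by auto
  then have "dU a \<noteq> 0" unfolding dU_def using finNU[of a] by auto
  then have "2 \<le> dU a" using na by simp
  then obtain y where y: "y \<in> NU a" "y \<noteq> c" using card_ge2_other[OF finNU[of a]] unfolding dU_def by blast
  obtain b where b: "b \<in> NU c" "b \<noteq> a" using card_ge2_other[OF finNU[of c]] dc unfolding dU_def by blast
  have yU: "y \<in> UU" "E a y" using y unfolding NU_def by auto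
  have bU: "b \<in> UU" "E c b" using b unfolding NU_def by auto
  show False
  proof (cases "y = b")
    case False
    have "distinct [y,a,c,b]" using False y b irr[OF yU(2)] irr[OF Eca] irr[OF bU(2)] by auto
    then show False using noP4[OF yU(1) aU cU bU(1)] yU(2) sym Eca bU(2) by blast
  next
    case True
    have Eab: "E a b" using True yU by simp
    show False
    proof (cases "dU c = 2")
      case True
      have NUc: "NU c = {a,b}" using card2_eq[OF finNU[of c]] True a b(1) b(2) unfolding dU_def by metis
      have "c \<in> MM" unfolding MM_def using cU True NUc Eab sym by auto
      then show False using cM by blast
    next
      case False
      then have "3 \<le> dU c" using dc by simp
      then obtain e where e: "e \<in> NU c" "e \<noteq> a" "e \<noteq> b"
        using card_ge3_other[OF finNU[of c]] unfolding dU_def by blast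
      have eU: "e \<in> UU" "E c e" using e unfolding NU_def by auto
      have "distinct [e,c,a,b]" using e irr[OF eU(2)] irr[OF Eca] irr[OF Eab] irr[OF bU(2)] by auto
      then show False using noP4[OF eU(1) cU aU bU(1)] eU(2) sym Eca Eab by blast
    qed
  qed
qed

lemma CC_disj: "c \<in> CC \<Longrightarrow> c' \<in> CC \<Longrightarrow> c \<noteq> c' \<Longrightarrow> NU c \<inter> NU c' = {}"
proof (rule ccontr)
  assume c: "c \<in> CC" "c' \<in> CC" "c \<noteq> c'" "NU c \<inter> NU c' \<noteq> {}"
  then obtain l where l: "l \<in> NU c" "l \<in> NU c'" by blast
  have d1: "dU l = 1" using CC_nbr_leaf[OF c(1) l(1)] .
  have "c \<in> NU l" "c' \<in> NU l" using l c(1,2) sym unfolding NU_def CC_def by auto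
  then have "{c,c'} \<subseteq> NU l" by auto
  then have "card {c,c'} \<le> dU l" unfolding dU_def using finNU card_mono by metis
  then show False using d1 c(3) by simp
qed

lemma CC_sum_le: "(\<Sum>c\<in>CC. dU c) \<le> card LL"
proof -
  have fC: "finite CC" unfolding CC_def using finU by simp
  have "(\<Sum>c\<in>CC. dU c) = card (\<Union>c\<in>CC. NU c)"
    unfolding dU_def using fC finNU CC_disj by (subst card_UN_disjoint) auto
  also have "\<dots> \<le> card LL"
  proof (rule card_mono)
    show "finite LL" unfolding LL_def using finU by simp
    show "(\<Union>c\<in>CC. NU c) \<subseteq> LL" unfolding LL_def using CC_nbr_leaf NU_sub by blast
  qed
  finally show ?thesis .
qed

definition "pp y v = real (dU v) / 2 - (real (dU v) - 1) * y v"

lemma UU_part: "UU = II \<union> LL \<union> MM \<union> CC"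
  unfolding II_def LL_def MM_def CC_def by auto

lemma P_decomp:
  "(\<Sum>v\<in>UU. pp y v) = (\<Sum>v\<in>II. pp y v) + (\<Sum>v\<in>LL. pp y v) + (\<Sum>v\<in>MM. pp y v) + (\<Sum>v\<in>CC. pp y v)"
proof -
  have f: "finite II" "finite LL" "finite MM" "finite CC"
    unfolding II_def LL_def MM_def CC_def using finU by auto
  have d: "II \<inter> LL = {}" "(II \<union> LL) \<inter> MM = {}" "(II \<union> LL \<union> MM) \<inter> CC = {}"
    unfolding II_def LL_def MM_def CC_def by auto
  show ?thesis unfolding UU_part using f d by (simp add: sum.union_disjoint)
qed

lemma P_facts:
  assumes y01: "\<And>v. v \<in> UU \<Longrightarrow> 0 \<le> y v \<and> y v \<le> 1"
  shows "(\<Sum>v\<in>UU. pp y v) \<ge> 0"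
    and "(\<Sum>v\<in>UU. pp y v) < 1/2 \<Longrightarrow> UU = II \<union> MM \<and> II \<inter> MM = {} \<and>
          (\<Sum>v\<in>UU. pp y v) = (\<Sum>v\<in>II. y v) + (\<Sum>v\<in>MM. 1 - y v)"
proof -
  have sI: "(\<Sum>v\<in>II. pp y v) = (\<Sum>v\<in>II. y v)"
    by (rule sum.cong) (auto simp: II_def pp_def)
  have sL: "(\<Sum>v\<in>LL. pp y v) = card LL / 2"
    by (subst sum.cong[of LL LL _ "\<lambda>_. 1/2"]) (auto simp: LL_def pp_def)
  have sM: "(\<Sum>v\<in>MM. pp y v) = (\<Sum>v\<in>MM. 1 - y v)"
    by (rule sum.cong) (auto simp: MM_def pp_def)
  have sMp: "(\<Sum>v\<in>MM. 1 - y v) \<ge> 0" using y01 by (intro sum_nonneg) (auto simp: MM_def)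
  have sIp: "(\<Sum>v\<in>II. y v) \<ge> 0" using y01 by (intro sum_nonneg) (auto simp: II_def)
  have sC: "(\<Sum>v\<in>CC. pp y v) \<ge> (\<Sum>v\<in>CC. 1 - real (dU v) / 2)"
  proof (rule sum_mono)
    fix v assume v: "v \<in> CC"
    then have "2 \<le> dU v" "v \<in> UU" unfolding CC_def by auto
    then have "(real (dU v) - 1) * y v \<le> (real (dU v) - 1) * 1"
      using y01 by (intro mult_left_mono) auto
    then show "1 - real (dU v) / 2 \<le> pp y v" unfolding pp_def by simp
  qed
  have fC: "finite CC" unfolding CC_def using finU by simp
  have sC2: "(\<Sum>v\<in>CC. 1 - real (dU v) / 2) = card CC - real (\<Sum>c\<in>CC. dU c) / 2"
    by (simp add: sum_subtractf sum_divide_distrib)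
  have CL: "real (\<Sum>c\<in>CC. dU c) \<le> card LL" using CC_sum_le by linarith
  have key: "(\<Sum>v\<in>LL. pp y v) + (\<Sum>v\<in>CC. pp y v) \<ge> card CC"
    using sL sC sC2 CL by linarith
  show "(\<Sum>v\<in>UU. pp y v) \<ge> 0"
    unfolding P_decomp using key sI sM sMp sIp by linarith
  assume lt: "(\<Sum>v\<in>UU. pp y v) < 1/2"
  have C0: "CC = {}"
  proof (rule ccontr)
    assume "CC \<noteq> {}"
    then have "card CC \<ge> 1" using fC by (simp add: Suc_le_eq card_gt_0_iff)
    then show False using lt unfolding P_decomp using key sI sM sMp sIp by linarith
  qed
  have L0: "LL = {}"
  proof (rule ccontr)
    assume "LL \<noteq> {}"
    then have "card LL \<ge> 1" unfolding LL_def using finU by (simp add: Suc_le_eq card_gt_0_iff)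
    moreover have "(\<Sum>v\<in>CC. pp y v) = 0" using C0 by simp
    ultimately show False using lt unfolding P_decomp using sL sI sM sMp sIp by linarith
  qed
  have "(\<Sum>v\<in>UU. pp y v) = (\<Sum>v\<in>II. y v) + (\<Sum>v\<in>MM. 1 - y v)"
    unfolding P_decomp using C0 L0 sI sM by simp
  moreover have "UU = II \<union> MM" using UU_part C0 L0 by simp
  moreover have "II \<inter> MM = {}" unfolding II_def MM_def by auto
  ultimately show "UU = II \<union> MM \<and> II \<inter> MM = {} \<and>
          (\<Sum>v\<in>UU. pp y v) = (\<Sum>v\<in>II. y v) + (\<Sum>v\<in>MM. 1 - y v)" by blast
qed

end

context gctx begin

lemma MM_mate:
  assumes v: "v \<in> MM" and a: "a \<in> NU v"
  shows "\<exists>b. NU v = {a,b} \<and> a \<noteq> b \<and> E a b \<and> NU a = {v,b} \<and> a \<in> MM"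
proof -
  have vU: "v \<in> UU" and d2: "dU v = 2" and tri: "\<And>a b. a\<in>NU v \<Longrightarrow> b\<in>NU v \<Longrightarrow> a\<noteq>b \<Longrightarrow> E a b"
    using v unfolding MM_def by auto
  obtain b where b: "b \<in> NU v" "b \<noteq> a" using card_ge2_other[OF finNU[of v]] d2 unfolding dU_def by auto
  have NUv: "NU v = {a,b}" using card2_eq[OF finNU[of v]] d2 a b unfolding dU_def by metis
  have Eab: "E a b" using tri a b by auto
  have aU: "a \<in> UU" "E v a" and bU: "b \<in> UU" "E v b" using a b unfolding NU_def by auto
  have NUa: "NU a = {v,b}"
  proof
    show "{v,b} \<subseteq> NU a" using vU bU aU Eab sym unfolding NU_def by auto
    show "NU a \<subseteq> {v,b}"
    proof
      fix z assume z: "z \<in> NU a"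
      have zU: "z \<in> UU" "E a z" using z unfolding NU_def by auto
      show "z \<in> {v,b}"
      proof (rule ccontr)
        assume "z \<notin> {v,b}"
        then have "distinct [z,a,v,b]" using irr[OF zU(2)] irr[OF aU(2)] irr[OF bU(2)] b(2) by auto
        then show False using noP4[OF zU(1) aU(1) vU bU(1)] zU(2) aU(2) bU(2) sym by blast
      qed
    qed
  qed
  have "a \<in> MM"
  proof -
    have "dU a = 2" unfolding dU_def NUa using irr[OF bU(2)] by simp
    moreover have "\<forall>a' b'. a'\<in>NU a \<and> b'\<in>NU a \<and> a'\<noteq>b' \<longrightarrow> E a' b'"
      unfolding NUa using bU(2) sym by auto
    ultimately show ?thesis unfolding MM_def using aU by auto
  qed
  then show ?thesis using NUv b(2) Eab NUa by blast
qed

lemma W_adj: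
  assumes w: "w \<in> V" "w \<notin> UU" "w \<noteq> u" and v: "v \<in> MM" and Ewv: "E w v" and a: "a \<in> NU v"
  shows "\<not> E w a"
proof
  assume Ewa: "E w a"
  obtain b where b: "NU v = {a,b}" "a \<noteq> b" "E a b" using MM_mate[OF v a] by blast
  have vU: "v \<in> UU" using v unfolding MM_def by auto
  have aU: "a \<in> UU" "E v a" using a unfolding NU_def by auto
  have bU: "b \<in> UU" "E v b" using b(1) unfolding NU_def by auto
  have "distinct [v,w,a,u,b]" using w vU aU bU u_notin b(2) irr[OF aU(2)] irr[OF bU(2)] by auto
  moreover have "E v w" "E v u" "E a u" "E u b" using sym Ewv uU vU aU bU by auto
  ultimately have "\<not> V5_free V E"
    using not_V5_free[OF sg, of v w a u b] aU(2) bU(2) Ewa by blast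
  then show False using free by blast
qed

lemma W_bound:
  assumes w: "w \<in> V" "w \<notin> UU" "w \<noteq> u"
  shows "3 * card {v\<in>MM. E w v} \<le> card MM"
proof -
  define A where "A = {v\<in>MM. E w v}"
  define B where "B = (\<Union>v\<in>A. NU v)"
  have fM: "finite MM" unfolding MM_def using finU by simp
  have fA: "finite A" unfolding A_def using fM by simp
  have AM: "A \<subseteq> MM" unfolding A_def by auto
  have BM: "B \<subseteq> MM"
  proof
    fix z assume "z \<in> B"
    then obtain v where v: "v \<in> A" "z \<in> NU v" unfolding B_def by blast
    then have "v \<in> MM" unfolding A_def by simp
    then show "z \<in> MM" using MM_mate[OF _ v(2)] by blast
  qed
  have fB: "finite B" using BM fM finite_subset by blast
  have AB: "A \<inter> B = {}"
  proof (rule ccontr)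
    assume "A \<inter> B \<noteq> {}"
    then obtain z v where z: "z \<in> A" "v \<in> A" "z \<in> NU v" unfolding B_def by blast
    have "v \<in> MM" "E w v" "E w z" using z unfolding A_def by auto
    then show False using W_adj[OF w _ _ z(3)] by blast
  qed
  have disj: "NU v1 \<inter> NU v2 = {}" if v: "v1 \<in> A" "v2 \<in> A" "v1 \<noteq> v2" for v1 v2
  proof (rule ccontr)
    assume "NU v1 \<inter> NU v2 \<noteq> {}"
    then obtain z where z: "z \<in> NU v1" "z \<in> NU v2" by blast
    have v1M: "v1 \<in> MM" and v2M: "v2 \<in> MM" "E w v2" using v unfolding A_def by auto
    obtain b where b: "NU v1 = {z,b}" "NU z = {v1,b}" using MM_mate[OF v1M z(1)] by blast
    have "E v2 z" using z(2) unfolding NU_def by simp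
    moreover have "v2 \<in> UU" using v2M(1) unfolding MM_def by simp
    ultimately have "v2 \<in> NU z" using sym[of v2 z] unfolding NU_def by simp
    then have "v2 = b" using b(2) v(3) by auto
    then have "v2 \<in> NU v1" using b(1) by simp
    moreover have "E w v1" using v(1) unfolding A_def by simp
    ultimately show False using W_adj[OF w v1M] v2M(2) by blast
  qed
  have cB: "card B = 2 * card A"
  proof -
    have "card B = (\<Sum>v\<in>A. card (NU v))" unfolding B_def
      using fA finNU disj by (subst card_UN_disjoint) auto
    also have "\<dots> = (\<Sum>v\<in>A. 2)" using AM unfolding MM_def dU_def by (intro sum.cong) auto
    finally show ?thesis by simp
  qed
  have "card A + card B = card (A \<union> B)" using card_Un_disjoint[OF fA fB AB] by simp
  also have "\<dots> \<le> card MM" using AM BM fM by (intro card_mono) auto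
  finally show ?thesis using cB unfolding A_def by simp
qed

end

lemma r_facts: fixes r :: real assumes "r > 3" shows "r*r > 3*r" "r*r > 9"
proof -
  show "r*r > 3*r" using assms by (intro mult_strict_right_mono) auto
  then show "r*r > 9" using assms by linarith
qed

lemma final_half:
  fixes r s D tau T a b S1 :: real
  assumes r3: "r > 3" and s0: "s \<ge> 0" and D0: "D \<ge> 0" and tau: "3*tau = r + D - s"
    and PT: "s + D + T < 1/2" and T: "T \<ge> 1 - a"
    and e1: "r*a = S1 + b" and e2: "r*b = a"
    and S1: "S1 \<le> tau + s"
  shows False
proof -
  have ag: "a > 1/2 + s + D" using PT T by linarith
  have "r*(r*a) = r*S1 + a" using e1 e2 by (simp add: algebra_simps)
  moreover have "r*S1 \<le> r*(tau+s)" using S1 r3 by (intro mult_left_mono) auto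
  ultimately have A: "a*(r*r-1) \<le> r*(tau+s)" by (simp add: algebra_simps)
  have rr: "r*r - 1 > 0" using r_facts[OF r3] by linarith
  have B: "(1/2 + s + D)*(r*r-1) < a*(r*r-1)" using ag rr by (intro mult_strict_right_mono) auto
  have C: "3*(1/2 + s + D)*(r*r-1) < r*(r + D + 2*s)"
  proof -
    have "3*(1/2 + s + D)*(r*r-1) < 3*(r*(tau+s))" using A B by linarith
    also have "3*(r*(tau+s)) = r*(3*tau + 3*s)" by (simp add: algebra_simps)
    also have "\<dots> = r*(r + D + 2*s)" using tau by simp
    finally show ?thesis .
  qed
  have X: "3*(1/2 + s + D)*(r*r-1) - r*(r + D + 2*s) = (r*r/2 - 3/2) + s*(3*(r*r) - 3 - 2*r) + D*(3*(r*r) - 3 - r)"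
    by (simp add: field_simps)
  have q1: "3*(r*r) - 3 - 2*r \<ge> 0" "3*(r*r) - 3 - r \<ge> 0" using r_facts[OF r3] r3 by linarith+
  have p1: "s*(3*(r*r) - 3 - 2*r) \<ge> 0" using s0 q1 by (intro mult_nonneg_nonneg) auto
  have p2: "D*(3*(r*r) - 3 - r) \<ge> 0" using D0 q1 by (intro mult_nonneg_nonneg) auto
  show False using C X p1 p2 r_facts[OF r3] by linarith
qed

lemma final_real:
  fixes r s D tau T a b S1 S2 :: real
  assumes r3: "r > 3" and s0: "s \<ge> 0" and D0: "D \<ge> 0" and tau: "3*tau = r + D - s"
    and PT: "s + D + T < 1/2"
    and a: "a > 0" and b: "b > 0"
    and e1: "r*a = S1 + b" and e2: "r*b = S2 + a"
    and S1: "S1 \<le> tau + s" and S2: "S2 \<le> tau + s"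
    and f1: "\<not> f1 \<Longrightarrow> S1 = 0" and f2: "\<not> f2 \<Longrightarrow> S2 = 0"
    and T: "T \<ge> (if f1 then 1 - a else 0) + (if f2 then 1 - b else 0)"
  shows False
proof (cases f1)
  case True note t1 = this
  show False
  proof (cases f2)
    case True
    have ab: "a + b > 3/2 + s + D" using PT T t1 True by simp
    have eq: "(r-1)*(a+b) = S1 + S2" using e1 e2 by (simp add: algebra_simps)
    have "S1 + S2 \<le> 2*(tau+s)" using add_mono[OF S1 S2] by simp
    then have A: "(r-1)*(a+b) \<le> 2*(tau+s)" using eq by simp
    have B: "(3/2 + s + D)*(r-1) < (a+b)*(r-1)" using ab r3 by (intro mult_strict_right_mono) auto
    have B': "(3/2 + s + D)*(r-1) < (r-1)*(a+b)" using B by (simp add: mult.commute)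
    have lin: "\<And>X Y::real. X < Y \<Longrightarrow> Y \<le> 2*(tau+s) \<Longrightarrow> 3*X < 2*(r + D + 2*s)"
      using tau by argo
    have C: "3*((3/2 + s + D)*(r-1)) < 2*(r + D + 2*s)" using lin[OF B' A] .
    have X: "3*((3/2 + s + D)*(r-1)) - 2*(r + D + 2*s) = (5/2*r - 9/2) + s*(3*r - 7) + D*(3*r - 5)"
      by (simp add: field_simps)
    have p1: "s*(3*r - 7) \<ge> 0" using s0 r3 by (intro mult_nonneg_nonneg) auto
    have p2: "D*(3*r - 5) \<ge> 0" using D0 r3 by (intro mult_nonneg_nonneg) auto
    show False using C X p1 p2 r3 by linarith
  next
    case False
    then have "S2 = 0" using f2 by simp
    then show False using final_half[OF r3 s0 D0 tau PT _ e1 _ S1] T t1 False e2 by simp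
  qed
next
  case False note t1 = this
  then have S10: "S1 = 0" using f1 by simp
  show False
  proof (cases f2)
    case True
    show False using final_half[OF r3 s0 D0 tau PT _ e2 _ S2] T t1 True e1 S10 by simp
  next
    case False
    then have "S2 = 0" using f2 by simp
    then have "r*(r*a) = a" using e1 e2 S10 by simp
    moreover have "r*r*a > 9*a" using r_facts[OF r3] a by (intro mult_strict_right_mono) auto
    ultimately show False using a by (simp add: algebra_simps)
  qed
qed


lemma sum_swap_nb:
  fixes f :: "nat \<Rightarrow> real"
  assumes fA: "finite A" and fB: "finite B" and symE: "\<And>a b. E a b \<Longrightarrow> E b a"
  shows "(\<Sum>v\<in>A. \<Sum>z\<in>{z\<in>B. E v z}. f z) = (\<Sum>z\<in>B. real (card {v\<in>A. E z v}) * f z)"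
proof -
  have "(\<Sum>v\<in>A. \<Sum>z\<in>{z\<in>B. E v z}. f z) = (\<Sum>v\<in>A. \<Sum>z\<in>B. if E v z then f z else 0)"
    using fB by (simp add: sum.inter_filter)
  also have "\<dots> = (\<Sum>z\<in>B. \<Sum>v\<in>A. if E v z then f z else 0)" by (rule sum.swap)
  also have "\<dots> = (\<Sum>z\<in>B. real (card {v\<in>A. E z v}) * f z)"
  proof (rule sum.cong)
    fix z assume "z \<in> B"
    have "(\<Sum>v\<in>A. if E v z then f z else 0) = (\<Sum>v\<in>{v\<in>A. E v z}. f z)"
      using sum.inter_filter[OF fA, of "\<lambda>v. f z" "\<lambda>v. E v z"] by simp
    also have "{v\<in>A. E v z} = {v\<in>A. E z v}" using symE by blast
    finally show "(\<Sum>v\<in>A. if E v z then f z else 0) = real (card {v\<in>A. E z v}) * f z" by simp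
  qed simp
  finally show ?thesis .
qed

lemma card_swap_nb:
  fixes A B :: "nat set"
  assumes fA: "finite A" and fB: "finite B" and symE: "\<And>a b. E a b \<Longrightarrow> E b a"
  shows "(\<Sum>v\<in>A. real (card {z\<in>B. E v z})) = (\<Sum>z\<in>B. real (card {v\<in>A. E z v}))"
  using sum_swap_nb[OF fA fB symE, where f="\<lambda>_. 1"] by simp

lemma one_edge:
  assumes sg: "simple_graph V E" and X: "X \<subseteq> V" and one: "num_edges X E = 1"
  shows "\<exists>a b. a \<in> X \<and> b \<in> X \<and> E a b \<and> (\<forall>z\<in>X. E a z \<longrightarrow> z = b) \<and> (\<forall>z\<in>X. E b z \<longrightarrow> z = a)"
proof -
  define S where "S = {{u, v} | u v. u \<in> X \<and> v \<in> X \<and> E u v}"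
  have "card S = 1" using one unfolding num_edges_def S_def by simp
  then obtain e where Se: "S = {e}" by (rule card_1_singletonE)
  then have "e \<in> S" by simp
  then obtain a b where ab: "e = {a,b}" "a \<in> X" "b \<in> X" "E a b" unfolding S_def by blast
  have "\<forall>z\<in>X. E a z \<longrightarrow> z = b"
  proof (intro ballI impI)
    fix z assume z: "z \<in> X" "E a z"
    then have "{a,z} \<in> S" unfolding S_def using ab by blast
    then have "{a,z} = {a,b}" using Se ab by simp
    then show "z = b" using sg_irr[OF sg z(2)] by (auto simp: doubleton_eq_iff)
  qed
  moreover have "\<forall>z\<in>X. E b z \<longrightarrow> z = a"
  proof (intro ballI impI)
    fix z assume z: "z \<in> X" "E b z"
    then have "{b,z} \<in> S" unfolding S_def using ab by blast
    then have "{b,z} = {a,b}" using Se ab by simp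
    then show "z = a" using sg_irr[OF sg z(2)] by (auto simp: doubleton_eq_iff)
  qed
  ultimately show ?thesis using ab by blast
qed

lemma lin_id:
  fixes rr A Cc G m B F H e P Y T r :: real
  shows "rr = A + Cc + G \<Longrightarrow> 2*m = 2*A + B + 2*F + H \<Longrightarrow> 2*e = H \<Longrightarrow>
    P = B/2 - Cc + Y \<Longrightarrow> T = F - G \<Longrightarrow> r = Y \<Longrightarrow> rr - r = m - e - P - T"
  by argo

locale ectx = gctx +
  fixes y :: "nat \<Rightarrow> real" and r :: real
  assumes ypos: "v \<in> V \<Longrightarrow> 0 < y v" and yle: "v \<in> V \<Longrightarrow> y v \<le> 1" and yu: "y u = 1"
    and eig: "v \<in> V \<Longrightarrow> (\<Sum>z\<in>nbhd V E v. y z) = r * y v"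
begin

definition "WW = V - (UU \<union> {u})"
definition "NW v = {z\<in>WW. E v z}"
definition "dW v = card (NW v)"

lemma finW: "finite WW" unfolding WW_def using finV by simp
lemma finNW: "finite (NW v)" unfolding NW_def using finW by simp
lemma Vsplit: "V = insert u (UU \<union> WW)" unfolding WW_def using uV UUV by auto
lemma UW_disj: "UU \<inter> WW = {}" unfolding WW_def by auto
lemma u_notW: "u \<notin> WW" unfolding WW_def by auto
lemma WW_notadj: "w \<in> WW \<Longrightarrow> \<not> E w u"
  unfolding WW_def UU_def nbhd_def using sym by auto

lemma nbU: "v \<in> UU \<Longrightarrow> nbhd V E v = insert u (NU v \<union> NW v)"
  unfolding nbhd_def NU_def NW_def using Vsplit uU sym by auto
lemma nbW: "w \<in> WW \<Longrightarrow> nbhd V E w = NU w \<union> NW w"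
proof -
  assume w: "w \<in> WW"
  have "z \<in> UU \<or> z \<in> WW" if "z \<in> V" "E w z" for z
  proof -
    have "z \<noteq> u" using WW_notadj[OF w] that(2) by auto
    then show ?thesis using that(1) Vsplit by auto
  qed
  then show ?thesis unfolding nbhd_def NU_def NW_def using Vsplit by auto
qed
lemma nbu: "nbhd V E u = UU" unfolding UU_def ..

lemma sum_V: "sum g V = g u + sum g UU + sum g WW"
proof -
  have "sum g (insert u (UU \<union> WW)) = g u + (sum g UU + sum g WW)"
    using finU finW UW_disj u_notin u_notW by (simp add: sum.union_disjoint)
  then show ?thesis using Vsplit by (simp add: add.assoc)
qed

lemma r_eq: "r = (\<Sum>v\<in>UU. y v)"
  using eig[OF uV] yu nbu by simp

lemma sumU: "v \<in> UU \<Longrightarrow> (\<Sum>z\<in>nbhd V E v. y z) = 1 + (\<Sum>z\<in>NU v. y z) + (\<Sum>z\<in>NW v. y z)"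
proof -
  assume v: "v \<in> UU"
  have d: "NU v \<inter> NW v = {}" "u \<notin> NU v \<union> NW v"
    unfolding NU_def NW_def using UW_disj u_notin u_notW by auto
  show ?thesis unfolding nbU[OF v] using d finNU finNW yu
    by (simp add: sum.union_disjoint)
qed

lemma cardU: "v \<in> UU \<Longrightarrow> card (nbhd V E v) = 1 + dU v + dW v"
proof -
  assume v: "v \<in> UU"
  have d: "NU v \<inter> NW v = {}" "u \<notin> NU v \<union> NW v"
    unfolding NU_def NW_def using UW_disj u_notin u_notW by auto
  show ?thesis unfolding nbU[OF v] dU_def dW_def using d finNU finNW
    by (simp add: card_Un_disjoint)
qed

lemma cardW: "w \<in> WW \<Longrightarrow> card (nbhd V E w) = dU w + dW w"
proof -
  assume w: "w \<in> WW"
  have d: "NU w \<inter> NW w = {}" unfolding NU_def NW_def using UW_disj by auto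
  show ?thesis unfolding nbW[OF w] dU_def dW_def using d finNU finNW
    by (simp add: card_Un_disjoint)
qed

lemma identity:
  "r*r - r = real (num_edges V E) - real (num_edges WW E) - (\<Sum>v\<in>UU. pp y v)
     - (\<Sum>w\<in>WW. real (dU w) * (1 - y w))"
proof -
  have symE: "\<And>a b. E a b \<Longrightarrow> E b a" using sym .
  have s1: "(\<Sum>v\<in>UU. \<Sum>z\<in>NU v. y z) = (\<Sum>z\<in>UU. real (dU z) * y z)"
    unfolding NU_def dU_def using sum_swap_nb[OF finU finU symE] by simp
  have s2: "(\<Sum>v\<in>UU. \<Sum>z\<in>NW v. y z) = (\<Sum>z\<in>WW. real (dU z) * y z)"
    unfolding NW_def dU_def NU_def using sum_swap_nb[OF finU finW symE] by simp
  have c2: "(\<Sum>v\<in>UU. real (dW v)) = (\<Sum>z\<in>WW. real (dU z))"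
    unfolding NW_def dW_def dU_def NU_def using card_swap_nb[OF finU finW symE] by simp
  have rr: "r*r = real (card UU) + (\<Sum>z\<in>UU. real (dU z) * y z) + (\<Sum>z\<in>WW. real (dU z) * y z)"
  proof -
    have "r*r = (\<Sum>v\<in>UU. r * y v)" using r_eq by (simp add: sum_distrib_left)
    also have "\<dots> = (\<Sum>v\<in>UU. 1 + (\<Sum>z\<in>NU v. y z) + (\<Sum>z\<in>NW v. y z))"
    proof (rule sum.cong)
      fix v assume v: "v \<in> UU"
      then have "v \<in> V" using UUV by auto
      then show "r * y v = 1 + (\<Sum>z\<in>NU v. y z) + (\<Sum>z\<in>NW v. y z)"
        using eig sumU[OF v] by simp
    qed simp
    also have "\<dots> = real (card UU) + (\<Sum>v\<in>UU. \<Sum>z\<in>NU v. y z) + (\<Sum>v\<in>UU. \<Sum>z\<in>NW v. y z)"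
      by (simp add: sum.distrib)
    finally show ?thesis using s1 s2 by simp
  qed
  have hs: "2 * real (num_edges V E) = real (card UU) + (\<Sum>v\<in>UU. 1 + real (dU v) + real (dW v))
      + (\<Sum>w\<in>WW. real (dU w) + real (dW w))"
  proof -
    have "2 * num_edges V E = (\<Sum>v\<in>V. card (nbhd V E v))"
      using handshake[OF sg, of V] unfolding nbhd_def by simp
    also have "\<dots> = card (nbhd V E u) + ((\<Sum>v\<in>UU. card (nbhd V E v)) + (\<Sum>v\<in>WW. card (nbhd V E v)))"
      using sum_V[of "\<lambda>v. card (nbhd V E v)"] by (simp add: add.assoc)
    finally have "real (2 * num_edges V E) = real (card UU) + (\<Sum>v\<in>UU. real (card (nbhd V E v)))
        + (\<Sum>v\<in>WW. real (card (nbhd V E v)))" using nbu by simp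
    moreover have "(\<Sum>v\<in>UU. real (card (nbhd V E v))) = (\<Sum>v\<in>UU. 1 + real (dU v) + real (dW v))"
      using cardU by (intro sum.cong) auto
    moreover have "(\<Sum>v\<in>WW. real (card (nbhd V E v))) = (\<Sum>v\<in>WW. real (dU v) + real (dW v))"
      using cardW by (intro sum.cong) auto
    ultimately show ?thesis by simp
  qed
  have hW: "2 * real (num_edges WW E) = (\<Sum>w\<in>WW. real (dW w))"
  proof -
    have "WW \<subseteq> V" unfolding WW_def by auto
    then have "2 * num_edges WW E = (\<Sum>w\<in>WW. dW w)"
      using handshake[OF sg] unfolding dW_def NW_def by simp
    then show ?thesis by (metis of_nat_mult of_nat_numeral of_nat_sum)
  qed
  have P: "(\<Sum>v\<in>UU. pp y v) = (\<Sum>v\<in>UU. real (dU v))/2 - (\<Sum>v\<in>UU. real (dU v) * y v) + (\<Sum>v\<in>UU. y v)"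
    unfolding pp_def by (simp add: sum.distrib sum_subtractf sum_divide_distrib algebra_simps)
  have T: "(\<Sum>w\<in>WW. real (dU w) * (1 - y w)) = (\<Sum>w\<in>WW. real (dU w)) - (\<Sum>w\<in>WW. real (dU w) * y w)"
    by (simp add: sum_subtractf algebra_simps)
  have hs2: "2 * real (num_edges V E) = 2 * real (card UU) + (\<Sum>v\<in>UU. real (dU v)) + 2 * (\<Sum>w\<in>WW. real (dU w))
      + (\<Sum>w\<in>WW. real (dW w))"
    using hs c2 by (simp add: sum.distrib)
  show ?thesis using lin_id[OF rr hs2 hW P T r_eq] .
qed

end

context ectx begin

lemma S_bound:
  assumes UIM: "UU = II \<union> MM" and w: "w \<in> WW"
  shows "(\<Sum>z\<in>NU w. y z) \<le> real (card MM) / 3 + (\<Sum>v\<in>II. y v)"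
proof -
  have wV: "w \<in> V" "w \<notin> UU" "w \<noteq> u" using w unfolding WW_def by auto
  have fI: "finite II" and fM: "finite MM" unfolding II_def MM_def using finU by auto
  have split: "NU w = (NU w \<inter> II) \<union> (NU w \<inter> MM)" using NU_sub UIM by auto
  have dj: "(NU w \<inter> II) \<inter> (NU w \<inter> MM) = {}" unfolding II_def MM_def by auto
  have "(\<Sum>z\<in>NU w. y z) = (\<Sum>z\<in>NU w \<inter> II. y z) + (\<Sum>z\<in>NU w \<inter> MM. y z)"
    using finNU dj by (subst split) (simp add: sum.union_disjoint)
  also have "(\<Sum>z\<in>NU w \<inter> II. y z) \<le> (\<Sum>v\<in>II. y v)"
    using fI ypos UUV UIM by (intro sum_mono2) (auto intro: less_imp_le)
  also have "(\<Sum>z\<in>NU w \<inter> MM. y z) \<le> (\<Sum>z\<in>NU w \<inter> MM. 1)"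
    using yle UUV UIM NU_sub by (intro sum_mono) auto
  also have "(\<Sum>z\<in>NU w \<inter> MM. 1::real) = real (card {v\<in>MM. E w v})"
  proof -
    have "NU w \<inter> MM = {v\<in>MM. E w v}" unfolding NU_def MM_def by auto
    then show ?thesis by simp
  qed
  also have "real (card {v\<in>MM. E w v}) \<le> real (card MM) / 3"
    using W_bound[OF wV] by simp
  finally show ?thesis by simp
qed

lemma main_contra:
  assumes r3: "r > 3" and lb: "r*r - r > real (num_edges V E) - 3/2"
    and ne: "num_edges WW E \<noteq> 0"
  shows False
proof -
  define P where "P = (\<Sum>v\<in>UU. pp y v)"
  define T where "T = (\<Sum>w\<in>WW. real (dU w) * (1 - y w))"
  have y01U: "\<And>v. v \<in> UU \<Longrightarrow> 0 \<le> y v \<and> y v \<le> 1"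
    using ypos yle UUV by (meson less_imp_le subsetD)
  have P0: "P \<ge> 0" unfolding P_def using P_facts(1)[OF y01U] .
  have WV: "WW \<subseteq> V" unfolding WW_def by auto
  have T0: "T \<ge> 0" unfolding T_def
    using yle WV by (intro sum_nonneg mult_nonneg_nonneg) auto
  have id: "r*r - r = real (num_edges V E) - real (num_edges WW E) - P - T"
    using identity unfolding P_def T_def .
  have e1: "num_edges WW E = 1" using id lb P0 T0 ne by linarith
  have PT: "P + T < 1/2" using id lb e1 by simp
  then have "P < 1/2" using T0 by linarith
  then have PF: "UU = II \<union> MM \<and> II \<inter> MM = {} \<and> P = (\<Sum>v\<in>II. y v) + (\<Sum>v\<in>MM. 1 - y v)"
    using P_facts(2)[of y, OF y01U] unfolding P_def by blast
  obtain w1 w2 where w: "w1 \<in> WW" "w2 \<in> WW" "E w1 w2" "\<forall>z\<in>WW. E w1 z \<longrightarrow> z = w2"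
      "\<forall>z\<in>WW. E w2 z \<longrightarrow> z = w1"
    using one_edge[OF sg WV e1] by blast
  have w12: "w1 \<noteq> w2" using irr w(3) .
  have E21: "E w2 w1" using sym[OF w(3)] .
  have NW1: "NW w1 = {w2}"
  proof (rule Set.set_eqI)
    fix z show "z \<in> NW w1 \<longleftrightarrow> z \<in> {w2}" unfolding NW_def using w(2,3,4) by blast
  qed
  have NW2: "NW w2 = {w1}"
  proof (rule Set.set_eqI)
    fix z show "z \<in> NW w2 \<longleftrightarrow> z \<in> {w1}" unfolding NW_def using w(1,5) E21 by blast
  qed
  have IU: "II \<subseteq> V" "MM \<subseteq> V" unfolding II_def MM_def using UUV by auto
  define s where "s = (\<Sum>v\<in>II. y v)"
  define D where "D = (\<Sum>v\<in>MM. 1 - y v)"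
  define tau where "tau = real (card MM) / 3"
  have fI: "finite II" and fM: "finite MM" unfolding II_def MM_def using finU by auto
  have s0: "s \<ge> 0" unfolding s_def
  proof (rule sum_nonneg)
    fix v assume "v \<in> II" then show "0 \<le> y v" using ypos IU by (meson less_imp_le subsetD)
  qed
  have D0: "D \<ge> 0" unfolding D_def
  proof (rule sum_nonneg)
    fix v assume "v \<in> MM" then show "0 \<le> 1 - y v" using yle IU by (meson diff_ge_0_iff_ge subsetD)
  qed
  have rsum: "r = s + (\<Sum>v\<in>MM. y v)"
    unfolding r_eq s_def using PF fI fM by (simp add: sum.union_disjoint)
  have "(\<Sum>v\<in>MM. y v) = real (card MM) - D" unfolding D_def by (simp add: sum_subtractf)
  then have tau: "3*tau = r + D - s" unfolding tau_def using rsum by simp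
  have PT': "s + D + T < 1/2" using PT PF unfolding s_def D_def by simp
  have eqw: "r * y wa = (\<Sum>z\<in>NU wa. y z) + y wb" if "wa \<in> WW" "NW wa = {wb}" "wb \<in> WW" for wa wb
  proof -
    have "wa \<in> V" using that WV by auto
    then have "r * y wa = (\<Sum>z\<in>nbhd V E wa. y z)" using eig by simp
    also have "\<dots> = (\<Sum>z\<in>NU wa \<union> {wb}. y z)" using nbW[OF that(1)] that(2) by simp
    also have "\<dots> = (\<Sum>z\<in>NU wa. y z) + y wb"
    proof -
      have "wb \<notin> NU wa" using that(3) NU_sub UW_disj by auto
      then show ?thesis using finNU by simp
    qed
    finally show ?thesis .
  qed
  have Tge: "T \<ge> real (dU w1) * (1 - y w1) + real (dU w2) * (1 - y w2)"
  proof -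
    have "(\<Sum>w\<in>{w1,w2}. real (dU w) * (1 - y w)) \<le> T"
      unfolding T_def
    proof (rule sum_mono2[OF finW])
      show "{w1, w2} \<subseteq> WW" using w(1,2) by simp
      fix b assume "b \<in> WW - {w1, w2}"
      then have "b \<in> V" using WV by auto
      then show "0 \<le> real (dU b) * (1 - y b)" using yle by (intro mult_nonneg_nonneg) auto
    qed
    then show ?thesis using w12 by simp
  qed
  have flag: "real (dU wa) * (1 - y wa) \<ge> (if NU wa \<noteq> {} then 1 - y wa else 0)" if "wa \<in> WW" for wa
  proof (cases "NU wa = {}")
    case True
    have "wa \<in> V" using that WV by auto
    then have "0 \<le> real (dU wa) * (1 - y wa)" using yle by (intro mult_nonneg_nonneg) auto
    then show ?thesis using True by simp
  next
    case False
    then have "dU wa \<ge> 1" unfolding dU_def using finNU by (simp add: Suc_le_eq card_gt_0_iff)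
    moreover have "1 - y wa \<ge> 0" using yle that WV by auto
    ultimately have "real (dU wa) * (1 - y wa) \<ge> 1 * (1 - y wa)" by (intro mult_right_mono) auto
    then show ?thesis using False by simp
  qed
  have Tf: "T \<ge> (if NU w1 \<noteq> {} then 1 - y w1 else 0) + (if NU w2 \<noteq> {} then 1 - y w2 else 0)"
    using Tge flag[OF w(1)] flag[OF w(2)] by linarith
  have Sb1: "(\<Sum>z\<in>NU w1. y z) \<le> tau + s" using S_bound[OF _ w(1)] PF unfolding tau_def s_def by simp
  have Sb2: "(\<Sum>z\<in>NU w2. y z) \<le> tau + s" using S_bound[OF _ w(2)] PF unfolding tau_def s_def by simp
  have a: "y w1 > 0" "y w2 > 0" using ypos w(1,2) WV by auto
  show False
    using final_real[OF r3 s0 D0 tau PT' a(1) a(2) eqw[OF w(1) NW1 w(2)] eqw[OF w(2) NW2 w(1)] Sb1 Sb2,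
        of "NU w1 \<noteq> {}" "NU w2 \<noteq> {}"] Tf by simp
qed

end

lemma lower_bound:
  fixes V :: "nat set" and E :: "nat \<Rightarrow> nat \<Rightarrow> bool" and m :: nat
  assumes m8: "m \<ge> 8"
    and maxh: "\<forall>V' (E' :: nat \<Rightarrow> nat \<Rightarrow> bool). simple_graph V' E' \<and> V5_free V' E' \<and>
           no_isolated V' E' \<and> num_edges V' E' = m \<longrightarrow>
           spectral_radius V' E' \<le> spectral_radius V E"
  shows "spectral_radius V E * spectral_radius V E - spectral_radius V E > real m - 3/2"
    and "spectral_radius V E > 3"
proof -
  define rho where "rho = spectral_radius V E"
  obtain r where r: "r > 1" "r*r - r > real m - 3/2" "r \<le> rho"
  proof (cases "even m")
    case True
    define k where "k = m div 2 - 1"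
    have mk: "m = 2*k+2" and k1: "k \<ge> 1" using True m8 unfolding k_def by auto
    obtain V' and E' :: "nat \<Rightarrow> nat \<Rightarrow> bool" and r :: real where c: "simple_graph V' E'" "V5_free V' E'" "no_isolated V' E'"
      "num_edges V' E' = 2*k+2" "r > 1" "r*r - r > 2 * real k + 1/2" "r \<le> spectral_radius V' E'"
      using comp_even[OF k1] by blast
    have "spectral_radius V' E' \<le> rho" using maxh c(1-4) mk unfolding rho_def by blast
    moreover have "real m - 3/2 = 2 * real k + 1/2" using mk by simp
    ultimately show ?thesis using that c(5-7) by (metis order_trans)
  next
    case False
    define k where "k = m div 2"
    have mk: "m = 2*k+1" and k1: "k \<ge> 1" using False m8 unfolding k_def by auto
    obtain V' and E' :: "nat \<Rightarrow> nat \<Rightarrow> bool" and r :: real where c: "simple_graph V' E'" "V5_free V' E'" "no_isolated V' E'"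
      "num_edges V' E' = 2*k+1" "r > 0" "r*r - r = 2 * real k" "r \<le> spectral_radius V' E'"
      using comp_odd[OF k1] by blast
    have "spectral_radius V' E' \<le> rho" using maxh c(1-4) mk unfolding rho_def by blast
    then have rr: "r \<le> rho" using c(7) by simp
    have r1: "r > 1"
    proof (rule ccontr)
      assume "\<not> r > 1"
      then have "r*r \<le> r*1" using c(5) by (intro mult_left_mono) auto
      then show False using c(6) k1 by simp
    qed
    have "r*r - r > real m - 3/2" using c(6) mk by simp
    then show ?thesis using that r1 rr by blast
  qed
  have "(rho - r) * (rho + r - 1) \<ge> 0" using r by (intro mult_nonneg_nonneg) auto
  then have "rho*rho - rho \<ge> r*r - r" by (simp add: algebra_simps)
  then show lb: "spectral_radius V E * spectral_radius V E - spectral_radius V E > real m - 3/2"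
    using r unfolding rho_def by linarith
  show "spectral_radius V E > 3"
  proof (rule ccontr)
    assume "\<not> spectral_radius V E > 3"
    then have "rho \<le> 3" unfolding rho_def by simp
    moreover have "rho > 1" using r by simp
    ultimately have "(rho - 3) * (rho + 2) \<le> 0" by (intro mult_nonpos_nonneg) auto
    then have "rho*rho - rho \<le> 6" by (simp add: algebra_simps)
    then show False using lb m8 unfolding rho_def by simp
  qed
qed

theorem mainTheorem4:
  fixes V :: "nat set" and E :: "nat \<Rightarrow> nat \<Rightarrow> bool" and m :: nat
    and x :: "nat \<Rightarrow> real" and ustar :: nat
  assumes "m \<ge> 8"
    and "simple_graph V E" and "V5_free V E" and "no_isolated V E" and "num_edges V E = m"
    and "\<forall>V' (E' :: nat \<Rightarrow> nat \<Rightarrow> bool). simple_graph V' E' \<and> V5_free V' E' \<and>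
           no_isolated V' E' \<and> num_edges V' E' = m \<longrightarrow>
           spectral_radius V' E' \<le> spectral_radius V E"
    and "perron_vector V E x"
    and "ustar \<in> V" and "\<forall>v \<in> V. x v \<le> x ustar"
    and "V - (nbhd V E ustar \<union> {ustar}) \<noteq> {}"
  shows "num_edges (V - (nbhd V E ustar \<union> {ustar})) E = 0"
proof (rule ccontr)
  assume ne: "num_edges (V - (nbhd V E ustar \<union> {ustar})) E \<noteq> 0"
  define rho where "rho = spectral_radius V E"
  have xpos: "\<And>v. v \<in> V \<Longrightarrow> x v > 0" and xeq: "\<And>v. v \<in> V \<Longrightarrow> (\<Sum>z\<in>nbhd V E v. x z) = rho * x v"
    using assms(7) unfolding perron_vector_def rho_def by auto
  have xu: "x ustar > 0" using xpos assms(8) .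
  define y where "y v = x v / x ustar" for v
  have ec: "ectx V E ustar y rho"
  proof (unfold_locales)
    show "simple_graph V E" "V5_free V E" "ustar \<in> V" using assms by auto
    fix v
    show "v \<in> V \<Longrightarrow> 0 < y v" unfolding y_def using xpos xu by simp
    show "v \<in> V \<Longrightarrow> y v \<le> 1" unfolding y_def using assms(9) xu by simp
    show "y ustar = 1" unfolding y_def using xu by simp
    assume v: "v \<in> V"
    have "(\<Sum>z\<in>nbhd V E v. y z) = (\<Sum>z\<in>nbhd V E v. x z) / x ustar"
      unfolding y_def by (simp add: sum_divide_distrib)
    also have "\<dots> = rho * y v" using xeq[OF v] unfolding y_def by simp
    finally show "(\<Sum>z\<in>nbhd V E v. y z) = rho * y v" .
  qed
  interpret e: ectx V E ustar y rho by (rule ec)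
  have r3: "rho > 3" using lower_bound(2)[OF assms(1) assms(6)] unfolding rho_def .
  have lb: "rho*rho - rho > real (num_edges V E) - 3/2"
    using lower_bound(1)[OF assms(1) assms(6)] assms(5) unfolding rho_def by simp
  have "e.WW = V - (nbhd V E ustar \<union> {ustar})" unfolding e.WW_def e.UU_def ..
  then have "num_edges e.WW E \<noteq> 0" using ne by simp
  then show False using e.main_contra[OF r3 lb] by blast
qed

end
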